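(* Let $p$ be a prime and $n\ge1$, and suppose $p^n-1=st$ with positive integers $s<t$ and $\gcd(s,t)=1$. Let $\alpha$ be a generator of $\mathbb{F}_{p^n}^\times$, $\beta=\alpha^t$, $\gamma=\alpha^s$. Let $S_0\subset\mathbb{Z}_s\times\mathbb{Z}_t$ be a linearly independent pattern of size $m$ with $m\mid n$, and let $r=n/m$. Then there exist shifts $(a_1,b_1),\dots,(a_r,b_r)\in\mathbb{Z}_s\times\mathbb{Z}_t$ such that the translates $T_{a_1,b_1}(S_0),\dots,T_{a_r,b_r}(S_0)$ are pairwise disjoint and their union $S=\bigcup_{k=1}^r T_{a_k,b_k}(S_0)$ is a basis pattern, and hence, for any nonzero $\mathbb{F}_p$-linear map $\psi:\mathbb{F}_{p^n}\to\mathbb{F}_p$, a sampling pattern for the array $B_{i,j}=\psi(\beta^i\gamma^j)$.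
   Context: $\mathbb{Z}_s=\mathbb{Z}/s\mathbb{Z}$, $\mathbb{Z}_t=\mathbb{Z}/t\mathbb{Z}$; $(i,j)\mapsto\beta^i\gamma^j$ is a well-defined bijection $\mathbb{Z}_s\times\mathbb{Z}_t\to\mathbb{F}_{p^n}^\times$. For a pattern $S\subset\mathbb{Z}_s\times\mathbb{Z}_t$, $A|_S=\{\beta^i\gamma^j:(i,j)\in S\}$. $S$ is linearly independent if the elements of $A|_S$ are $\mathbb{F}_p$-linearly independent, and a basis pattern if $A|_S$ is an $\mathbb{F}_p$-basis of $\mathbb{F}_{p^n}$. $T_{a,b}(i,j)=(i+a\bmod s,\ j+b\bmod t)$. For $(a,b)\in\mathbb{Z}_s\times\mathbb{Z}_t$, the value pattern of $S$ is $v_{a,b}=(B_{i+a,j+b})_{(i,j)\in S}\in\mathbb{F}_p^S$; $S$ is a sampling pattern if the $p^n-1$ vectors $v_{a,b}$ are pairwise distinct and are exactly the nonzero vectors of $\mathbb{F}_p^S$. *)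

theory Defs
  imports Main "HOL-Library.FuncSet" "HOL-Computational_Algebra.Primes"
begin

text \<open>The prime subfield F_p of a field of characteristic p, i.e. the image of the naturals.\<close>
definition Fp :: "'a::field set" where
  "Fp = range of_nat"

definition pat_elt :: "'a::field \<Rightarrow> 'a \<Rightarrow> nat \<times> nat \<Rightarrow> 'a" where
  "pat_elt \<beta> \<gamma> x = \<beta> ^ fst x * \<gamma> ^ snd x"

text \<open>Translation T_{a,b} on Z_s x Z_t (represented as {0..<s} x {0..<t}).\<close>
definition shiftT :: "nat \<Rightarrow> nat \<Rightarrow> nat \<times> nat \<Rightarrow> nat \<times> nat \<Rightarrow> nat \<times> nat" where
  "shiftT s t ab x = ((fst x + fst ab) mod s, (snd x + snd ab) mod t)"

definition lin_indep_pat :: "'a::field \<Rightarrow> 'a \<Rightarrow> (nat \<times> nat) set \<Rightarrow> bool" where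
  "lin_indep_pat \<beta> \<gamma> S \<longleftrightarrow>
     (\<forall>c. (\<forall>x\<in>S. c x \<in> Fp) \<and> (\<Sum>x\<in>S. c x * pat_elt \<beta> \<gamma> x) = 0 \<longrightarrow> (\<forall>x\<in>S. c x = 0))"

definition basis_pat :: "'a::field \<Rightarrow> 'a \<Rightarrow> (nat \<times> nat) set \<Rightarrow> bool" where
  "basis_pat \<beta> \<gamma> S \<longleftrightarrow> lin_indep_pat \<beta> \<gamma> S \<and>
     (\<forall>y. \<exists>c. (\<forall>x\<in>S. c x \<in> Fp) \<and> y = (\<Sum>x\<in>S. c x * pat_elt \<beta> \<gamma> x))"

definition Fp_linear_functional :: "('a::field \<Rightarrow> 'a) \<Rightarrow> bool" where
  "Fp_linear_functional \<psi> \<longleftrightarrow> (\<forall>x. \<psi> x \<in> Fp) \<and> (\<forall>x y. \<psi> (x + y) = \<psi> x + \<psi> y)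
     \<and> (\<forall>c x. c \<in> Fp \<longrightarrow> \<psi> (c * x) = c * \<psi> x)"

definition value_pat :: "nat \<Rightarrow> nat \<Rightarrow> 'a::field \<Rightarrow> 'a \<Rightarrow> ('a \<Rightarrow> 'a) \<Rightarrow> (nat \<times> nat) set
    \<Rightarrow> nat \<times> nat \<Rightarrow> (nat \<times> nat \<Rightarrow> 'a)" where
  "value_pat s t \<beta> \<gamma> \<psi> S ab =
     restrict (\<lambda>x. \<psi> (pat_elt \<beta> \<gamma> (shiftT s t ab x))) S"

definition sampling_pat :: "nat \<Rightarrow> nat \<Rightarrow> 'a::field \<Rightarrow> 'a \<Rightarrow> ('a \<Rightarrow> 'a) \<Rightarrow> (nat \<times> nat) set \<Rightarrow> bool" where
  "sampling_pat s t \<beta> \<gamma> \<psi> S \<longleftrightarrow>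
     bij_betw (value_pat s t \<beta> \<gamma> \<psi> S) ({0..<s} \<times> {0..<t})
       {f \<in> S \<rightarrow>\<^sub>E Fp. \<exists>x\<in>S. f x \<noteq> 0}"

end

theory Submission
  imports Defs "HOL-Computational_Algebra.Computational_Algebra"
begin


lemma CHAR_pos_fin: "CHAR('a::{field,finite}) > 0"
  by (rule finite_imp_CHAR_pos) simp

lemma CHAR_prime_fin: "prime CHAR('a::{field,finite})"
  by (rule prime_CHAR_semidom[OF CHAR_pos_fin])

lemma of_nat_mod_CHAR': "(of_nat (x mod CHAR('a::{field,finite})) :: 'a) = of_nat x"
proof -
  have "x = x mod CHAR('a) + CHAR('a) * (x div CHAR('a))" by simp
  hence "(of_nat x :: 'a) = of_nat (x mod CHAR('a)) + of_nat CHAR('a) * of_nat (x div CHAR('a))"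
    by (metis of_nat_add of_nat_mult)
  thus ?thesis by simp
qed

lemma Fp_eq: "(Fp :: 'a::{field,finite} set) = of_nat ` {0..<CHAR('a)}"
proof
  show "(Fp :: 'a set) \<subseteq> of_nat ` {0..<CHAR('a)}"
    unfolding Fp_def
  proof
    fix y :: 'a assume "y \<in> range of_nat"
    then obtain x where "y = of_nat x" by auto
    hence "y = of_nat (x mod CHAR('a))" by (simp add: of_nat_mod_CHAR')
    moreover have "x mod CHAR('a) < CHAR('a)" using CHAR_pos_fin[where 'a='a] by simp
    ultimately show "y \<in> of_nat ` {0..<CHAR('a)}" by auto
  qed
qed (auto simp: Fp_def)

lemma inj_of_nat_CHAR: "inj_on (of_nat :: nat \<Rightarrow> 'a::{field,finite}) {0..<CHAR('a)}"
proof (rule inj_onI)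
  fix a b assume a: "a \<in> {0..<CHAR('a)}" and b: "b \<in> {0..<CHAR('a)}" and e: "(of_nat a :: 'a) = of_nat b"
  show "a = b"
  proof (rule ccontr)
    assume "a \<noteq> b"
    then consider "a < b" | "b < a" by linarith
    thus False
    proof cases
      case 1
      have "(of_nat (b - a) :: 'a) = of_nat b - of_nat a" using 1 by (simp add: of_nat_diff)
      hence "(of_nat (b - a) :: 'a) = 0" using e by simp
      hence "CHAR('a) dvd (b - a)" by (simp add: of_nat_eq_0_iff_char_dvd)
      moreover have "0 < b - a" "b - a < CHAR('a)" using 1 b by auto
      ultimately show False using nat_dvd_not_less by blast
    next
      case 2
      have "(of_nat (a - b) :: 'a) = of_nat a - of_nat b" using 2 by (simp add: of_nat_diff)
      hence "(of_nat (a - b) :: 'a) = 0" using e by simp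
      hence "CHAR('a) dvd (a - b)" by (simp add: of_nat_eq_0_iff_char_dvd)
      moreover have "0 < a - b" "a - b < CHAR('a)" using 2 a by auto
      ultimately show False using nat_dvd_not_less by blast
    qed
  qed
qed

lemma card_Fp: "card (Fp :: 'a::{field,finite} set) = CHAR('a)"
  using Fp_eq inj_of_nat_CHAR card_image by (metis card_atLeastLessThan diff_zero)

lemma Fp_0[simp]: "0 \<in> Fp"
  unfolding Fp_def using of_nat_0 by (metis rangeI)
lemma Fp_1[simp]: "1 \<in> Fp"
  unfolding Fp_def using of_nat_1 by (metis rangeI)

lemma Fp_add: "a \<in> Fp \<Longrightarrow> b \<in> Fp \<Longrightarrow> a + b \<in> Fp"
  unfolding Fp_def by (auto simp flip: of_nat_add)

lemma Fp_mult: "a \<in> Fp \<Longrightarrow> b \<in> Fp \<Longrightarrow> a * b \<in> Fp"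
  unfolding Fp_def by (auto simp flip: of_nat_mult)

lemma Fp_uminus: "(a::'a::{field,finite}) \<in> Fp \<Longrightarrow> - a \<in> Fp"
proof -
  assume "a \<in> Fp"
  then obtain k where k: "a = of_nat k" unfolding Fp_def by auto
  have "(of_nat (k * (CHAR('a) - 1)) :: 'a) + of_nat k = of_nat (k * CHAR('a))"
    using CHAR_pos_fin[where 'a='a]
    by (metis (no_types, lifting) Suc_pred' mult_Suc_right add.commute of_nat_add)
  also have "\<dots> = 0" by simp
  finally have "- a = of_nat (k * (CHAR('a) - 1))" using k
    by (metis add.commute add_eq_0_iff)
  thus ?thesis unfolding Fp_def by (metis rangeI)
qed

lemma Fp_diff: "(a::'a::{field,finite}) \<in> Fp \<Longrightarrow> b \<in> Fp \<Longrightarrow> a - b \<in> Fp"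
  using Fp_add Fp_uminus by (metis diff_conv_add_uminus)

lemma finite_Fp: "finite (Fp :: 'a::{field,finite} set)" by simp

lemma Fp_inverse: "(a::'a::{field,finite}) \<in> Fp \<Longrightarrow> inverse a \<in> Fp"
proof (cases "a = 0")
  case False
  assume a: "a \<in> Fp"
  have inj: "inj_on ((*) a) Fp" using False by (auto intro: inj_onI)
  have sub: "(*) a ` Fp \<subseteq> Fp" using a Fp_mult by blast
  have "card ((*) a ` Fp) = card (Fp :: 'a set)" using inj card_image by blast
  hence "(*) a ` Fp = Fp" using sub by (simp add: card_subset_eq)
  hence "1 \<in> (*) a ` Fp" by simp
  then obtain b where "b \<in> Fp" "a * b = 1" by auto
  hence "inverse a = b" using False by (metis inverse_unique)
  thus ?thesis using \<open>b \<in> Fp\<close> by simp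
qed simp



lemma CHAR_dvd_card: "CHAR('a::{field,finite}) dvd card (UNIV :: 'a set)"
proof -
  define C where "C = range (\<lambda>x::'a. (+) x ` Fp)"
  have U: "\<Union>C = UNIV" unfolding C_def
  proof (intro set_eqI iffI)
    fix z :: 'a show "z \<in> \<Union> (range (\<lambda>x. (+) x ` Fp))"
      by (rule UnionI[of "(+) z ` Fp"]) (auto intro: image_eqI[of _ _ 0])
  qed auto
  have cd: "\<forall>c\<in>C. card c = CHAR('a)"
  proof
    fix c assume "c \<in> C"
    then obtain x where "c = (+) x ` Fp" unfolding C_def by auto
    moreover have "inj_on ((+) x) Fp" by (auto intro: inj_onI)
    ultimately show "card c = CHAR('a)" using card_image card_Fp by metis
  qed
  have dj: "\<forall>c1\<in>C. \<forall>c2\<in>C. c1 \<noteq> c2 \<longrightarrow> c1 \<inter> c2 = {}"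
  proof (intro ballI impI)
    fix c1 c2 assume c1: "c1 \<in> C" and c2: "c2 \<in> C" and ne: "c1 \<noteq> c2"
    obtain x where x: "c1 = (+) x ` Fp" using c1 unfolding C_def by auto
    obtain y where y: "c2 = (+) y ` Fp" using c2 unfolding C_def by auto
    show "c1 \<inter> c2 = {}"
    proof (rule ccontr)
      assume "c1 \<inter> c2 \<noteq> {}"
      then obtain a b where a: "a \<in> Fp" and b: "b \<in> Fp" and e: "x + a = y + b"
        using x y by auto
      have "c1 \<subseteq> c2"
      proof
        fix z assume "z \<in> c1"
        then obtain u where u: "u \<in> Fp" "z = x + u" using x by auto
        have "z = y + (b - a + u)" using u e by (simp add: algebra_simps)
        moreover have "b - a + u \<in> Fp" using a b u Fp_diff Fp_add by blast
        ultimately show "z \<in> c2" using y by auto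
      qed
      moreover have "c2 \<subseteq> c1"
      proof
        fix z assume "z \<in> c2"
        then obtain u where u: "u \<in> Fp" "z = y + u" using y by auto
        have "z = x + (a - b + u)" using u e by (simp add: algebra_simps)
        moreover have "a - b + u \<in> Fp" using a b u Fp_diff Fp_add by blast
        ultimately show "z \<in> c1" using x by auto
      qed
      ultimately show False using ne by auto
    qed
  qed
  have "CHAR('a) * card C = card (\<Union>C)"
    by (rule card_partition) (use cd dj in auto)
  thus ?thesis using U by (metis dvd_triv_left)
qed

lemma CHAR_eq_p:
  assumes "prime p" "card (UNIV :: 'a::{field,finite} set) = p ^ n"
  shows "CHAR('a) = p"
proof -
  have "CHAR('a) dvd p ^ n" using CHAR_dvd_card assms(2) by metis
  hence "CHAR('a) dvd p" using prime_dvd_power CHAR_prime_fin by blast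
  thus ?thesis using primes_dvd_imp_eq CHAR_prime_fin assms(1) by blast
qed

definition lc :: "('i \<Rightarrow> 'a::field) \<Rightarrow> 'i set \<Rightarrow> ('i \<Rightarrow> 'a) \<Rightarrow> 'a" where
  "lc g S c = (\<Sum>x\<in>S. c x * g x)"

definition spn :: "('i \<Rightarrow> 'a::field) \<Rightarrow> 'i set \<Rightarrow> 'a set" where
  "spn g S = lc g S ` (S \<rightarrow>\<^sub>E Fp)"

definition indep :: "('i \<Rightarrow> 'a::field) \<Rightarrow> 'i set \<Rightarrow> bool" where
  "indep g S \<longleftrightarrow> (\<forall>c. (\<forall>x\<in>S. c x \<in> Fp) \<and> lc g S c = 0 \<longrightarrow> (\<forall>x\<in>S. c x = 0))"

lemma lc_restrict: "lc g S (restrict c S) = lc g S c"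
  unfolding lc_def by (rule sum.cong) auto

lemma spn_iff: "y \<in> spn g S \<longleftrightarrow> (\<exists>c. (\<forall>x\<in>S. c x \<in> Fp) \<and> y = lc g S c)"
proof
  assume "y \<in> spn g S" thus "\<exists>c. (\<forall>x\<in>S. c x \<in> Fp) \<and> y = lc g S c"
    unfolding spn_def by (auto simp: PiE_def Pi_def)
next
  assume "\<exists>c. (\<forall>x\<in>S. c x \<in> Fp) \<and> y = lc g S c"
  then obtain c where c: "\<forall>x\<in>S. c x \<in> Fp" "y = lc g S c" by blast
  have "restrict c S \<in> S \<rightarrow>\<^sub>E Fp" using c by auto
  moreover have "y = lc g S (restrict c S)" using c lc_restrict by metis
  ultimately show "y \<in> spn g S" unfolding spn_def by blast
qed

lemma lc_diff: "lc g S c1 - lc g S c2 = lc g S (\<lambda>x. c1 x - c2 x)"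
  unfolding lc_def by (simp add: sum_subtractf algebra_simps)

lemma card_spn:
  fixes g :: "'i \<Rightarrow> 'a::{field,finite}"
  assumes "finite S" "indep g S"
  shows "card (spn g S) = CHAR('a) ^ card S"
proof -
  have "inj_on (lc g S) (S \<rightarrow>\<^sub>E Fp)"
  proof (rule inj_onI)
    fix c1 c2 assume c1: "c1 \<in> S \<rightarrow>\<^sub>E Fp" and c2: "c2 \<in> S \<rightarrow>\<^sub>E Fp" and e: "lc g S c1 = lc g S c2"
    have "lc g S (\<lambda>x. c1 x - c2 x) = 0" using e lc_diff[of g S c1 c2] by simp
    moreover have "\<forall>x\<in>S. c1 x - c2 x \<in> Fp" using c1 c2 Fp_diff by (auto simp: PiE_def Pi_def)
    ultimately have "\<forall>x\<in>S. c1 x - c2 x = 0" using assms(2) unfolding indep_def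
      by (metis (no_types, lifting))
    thus "c1 = c2" using c1 c2 by (auto simp: PiE_def extensional_def fun_eq_iff)
  qed
  hence "card (spn g S) = card (S \<rightarrow>\<^sub>E (Fp :: 'a set))" unfolding spn_def by (simp add: card_image)
  also have "\<dots> = CHAR('a) ^ card S" using assms(1) by (simp add: card_PiE card_Fp)
  finally show ?thesis .
qed

lemma zero_in_spn: "0 \<in> spn g S"
  unfolding spn_iff lc_def by (rule exI[of _ "\<lambda>_. 0"]) auto

lemma gen_in_spn:
  assumes "finite S" "x \<in> S" shows "g x \<in> spn g S"
  unfolding spn_iff lc_def
proof (intro exI[of _ "\<lambda>y. if y = x then 1 else 0"] conjI)
  show "g x = (\<Sum>y\<in>S. (if y = x then 1 else 0) * g y)"
  proof -
    have "(\<Sum>y\<in>S. (if y = x then 1 else 0) * g y) = (\<Sum>y\<in>S. if y = x then g y else 0)"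
      by (rule sum.cong) auto
    also have "\<dots> = g x" using assms by (simp add: sum.delta)
    finally show ?thesis by simp
  qed
qed auto



lemma num_ineq:
  fixes q m u n :: nat
  assumes "q \<ge> 2" "m \<ge> 1" "u + m \<le> n"
  shows "(q^m - 1) * (q^u - 1) < q^n - 1"
proof -
  have q1: "q^u \<ge> 1" "q^(n-m) \<ge> 1" using assms by simp_all
  have "q^1 \<le> q^m" using assms by (intro power_increasing) auto
  hence q1': "q^m \<ge> 2" using assms by simp
  have "q^u \<le> q^(n-m)" using assms by (intro power_increasing) auto
  have qn: "q^n = q^m * q^(n-m)" using assms by (simp flip: power_add)
  have "int ((q^m - 1) * (q^u - 1)) = (int (q^m) - 1) * (int (q^u) - 1)"
    using q1 q1' by (simp add: of_nat_diff)
  also have "\<dots> \<le> (int (q^m) - 1) * (int (q^(n-m)) - 1)"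
  proof (rule mult_left_mono)
    show "int (q^u) - 1 \<le> int (q^(n-m)) - 1" using \<open>q^u \<le> q^(n-m)\<close> by linarith
    show "0 \<le> int (q^m) - 1" using q1' by linarith
  qed
  also have "\<dots> < int (q^n) - 1"
  proof -
    define A where "A = int (q^m)"
    define Bv where "Bv = int (q^(n-m))"
    have "A \<ge> 2" "Bv \<ge> 1" using q1 q1' unfolding A_def Bv_def by linarith+
    moreover have "int (q^n) = A * Bv" using qn unfolding A_def Bv_def by simp
    moreover have "(A - 1) * (Bv - 1) = A * Bv - A - Bv + 1" by (simp add: algebra_simps)
    ultimately show ?thesis unfolding A_def[symmetric] Bv_def[symmetric] by linarith
  qed
  also have "\<dots> = int (q^n - 1)" using assms by (simp add: of_nat_diff)
  finally show ?thesis by linarith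
qed

lemma greedy_step:
  fixes g :: "'i \<Rightarrow> 'a::{field,finite}"
  assumes fG: "finite G"
    and hT: "\<And>ab x. ab \<in> G \<Longrightarrow> x \<in> G \<Longrightarrow> T ab x \<in> G \<and> g (T ab x) = g ab * g x"
    and hg: "g ` G = UNIV - {0}" and ginj: "inj_on g G"
    and S0: "S0 \<subseteq> G" "indep g S0" "card S0 = m" "m \<ge> 1"
    and U: "U \<subseteq> G" "indep g U" "card U + m \<le> n"
    and card: "card (UNIV :: 'a set) = CHAR('a) ^ n"
  shows "\<exists>ab\<in>G. U \<inter> T ab ` S0 = {} \<and> indep g (U \<union> T ab ` S0)"
proof -
  let ?q = "CHAR('a)"
  have q2: "?q \<ge> 2" using CHAR_prime_fin[where 'a='a] prime_ge_2_nat by blast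
  have fS0: "finite S0" and fU: "finite U" using S0 U fG finite_subset by auto
  define B where "B = {c::'a. c \<noteq> 0 \<and> (\<exists>w\<in>spn g S0 - {0}. c*w \<in> spn g U)}"
  have Bsub: "B \<subseteq> (\<lambda>(w,u). u / w) ` ((spn g S0 - {0}) \<times> (spn g U - {0}))"
  proof
    fix c assume "c \<in> B"
    then obtain w where w: "c \<noteq> 0" "w \<in> spn g S0 - {0}" "c * w \<in> spn g U" unfolding B_def by blast
    hence "c = (c*w)/w" "c * w \<noteq> 0" by auto
    thus "c \<in> (\<lambda>(w,u). u / w) ` ((spn g S0 - {0}) \<times> (spn g U - {0}))"
      using w by (auto intro!: image_eqI[of _ _ "(w, c*w)"])
  qed
  have "card B \<le> card ((\<lambda>(w,u). u / w) ` ((spn g S0 - {0}) \<times> (spn g U - {0})))"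
    by (rule card_mono) (simp_all add: Bsub)
  also have "\<dots> \<le> card ((spn g S0 - {0}) \<times> (spn g U - {0}))"
    by (rule card_image_le) simp
  also have "\<dots> = (?q^m - 1) * (?q^card U - 1)"
    using card_spn[OF fS0 S0(2)] card_spn[OF fU U(2)] S0(3) zero_in_spn[of g S0] zero_in_spn[of g U]
    by (simp add: card_cartesian_product card_Diff_singleton)
  also have "\<dots> < ?q^n - 1" using num_ineq q2 S0(4) U(3) by blast
  also have "\<dots> = card (UNIV - {0::'a})" using card by (simp add: card_Diff_singleton)
  finally have "card B < card (UNIV - {0::'a})" .
  have "\<not> (UNIV - {0::'a}) \<subseteq> B"
  proof
    assume "UNIV - {0::'a} \<subseteq> B"
    hence "card (UNIV - {0::'a}) \<le> card B" by (intro card_mono) simp_all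
    thus False using \<open>card B < card (UNIV - {0::'a})\<close> by simp
  qed
  then obtain c where c: "c \<noteq> 0" "c \<notin> B" by blast
  have "c \<in> g ` G" using hg c(1) by simp
  then obtain ab where ab: "ab \<in> G" "g ab = c" by auto
  have cgood: "\<And>w. w \<in> spn g S0 \<Longrightarrow> c * w \<in> spn g U \<Longrightarrow> w = 0"
    using c unfolding B_def by blast
  have gnz: "\<And>x. x \<in> G \<Longrightarrow> g x \<noteq> 0" using hg by blast
  have injT: "inj_on (T ab) S0"
  proof (rule inj_onI)
    fix x y assume x: "x \<in> S0" and y: "y \<in> S0" and e: "T ab x = T ab y"
    have "g ab * g x = g ab * g y" using hT[OF ab(1)] x y S0(1) e by (metis subsetD)
    hence "g x = g y" using c ab by simp
    thus "x = y" using ginj x y S0(1) by (meson inj_onD subsetD)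
  qed
  have disj: "U \<inter> T ab ` S0 = {}"
  proof (rule ccontr)
    assume "U \<inter> T ab ` S0 \<noteq> {}"
    then obtain x where x: "x \<in> S0" "T ab x \<in> U" by auto
    have "c * g x = g (T ab x)" using hT[OF ab(1)] x S0(1) ab(2) by auto
    hence "c * g x \<in> spn g U" using gen_in_spn[OF fU x(2)] by simp
    hence "g x = 0" using cgood gen_in_spn[OF fS0 x(1)] by blast
    thus False using gnz x S0(1) by auto
  qed
  have ind: "indep g (U \<union> T ab ` S0)"
    unfolding indep_def
  proof (intro allI impI)
    fix d assume d: "(\<forall>x\<in>U \<union> T ab ` S0. d x \<in> Fp) \<and> lc g (U \<union> T ab ` S0) d = 0"
    have "lc g (U \<union> T ab ` S0) d = lc g U d + lc g (T ab ` S0) d"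
      unfolding lc_def using disj fU fS0 by (simp add: sum.union_disjoint)
    also have "lc g (T ab ` S0) d = (\<Sum>x\<in>S0. d (T ab x) * g (T ab x))"
      unfolding lc_def using injT by (simp add: sum.reindex)
    also have "\<dots> = c * lc g S0 (\<lambda>x. d (T ab x))"
      unfolding lc_def sum_distrib_left
      by (rule sum.cong) (use hT[OF ab(1)] S0(1) ab(2) in auto)
    finally have e: "lc g U d + c * lc g S0 (\<lambda>x. d (T ab x)) = 0" using d by simp
    have w: "lc g S0 (\<lambda>x. d (T ab x)) \<in> spn g S0" unfolding spn_iff using d
      by (intro exI[of _ "\<lambda>x. d (T ab x)"] conjI ballI refl) (use d in blast)
    have "c * lc g S0 (\<lambda>x. d (T ab x)) = lc g U (\<lambda>x. - d x)"
      using e unfolding lc_def by (simp add: sum_negf eq_neg_iff_add_eq_0 add.commute)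
    moreover have "lc g U (\<lambda>x. - d x) \<in> spn g U" unfolding spn_iff
      by (intro exI[of _ "\<lambda>x. - d x"] conjI ballI refl Fp_uminus) (use d in blast)
    ultimately have "lc g S0 (\<lambda>x. d (T ab x)) = 0" using cgood w by metis
    moreover have "\<forall>x\<in>S0. d (T ab x) \<in> Fp" using d by blast
    ultimately have d0: "\<forall>x\<in>S0. d (T ab x) = 0" using S0(2) unfolding indep_def
      by (metis (no_types, lifting))
    hence "lc g U d = 0" using e by (metis add.right_neutral mult_zero_right \<open>lc g S0 (\<lambda>x. d (T ab x)) = 0\<close>)
    hence "\<forall>x\<in>U. d x = 0" using U(2) d unfolding indep_def by auto
    thus "\<forall>x\<in>U \<union> T ab ` S0. d x = 0" using d0 by auto
  qed
  show ?thesis using ab(1) disj ind by blast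
qed



lemma power_card_minus1:
  fixes x :: "'a::{field,finite}"
  assumes "x \<noteq> 0"
  shows "x ^ (card (UNIV :: 'a set) - 1) = 1"
proof -
  have c: "card (UNIV - {0::'a}) = card (UNIV :: 'a set) - 1" by (simp add: card_Diff_singleton)
  have "(\<Prod>y\<in>UNIV-{0}. x * y) = x ^ card (UNIV - {0::'a}) * (\<Prod>y\<in>UNIV-{0::'a}. y)"
    by (simp add: prod.distrib)
  moreover have "(\<Prod>y\<in>UNIV-{0}. x * y) = (\<Prod>y\<in>UNIV-{0::'a}. y)"
    by (rule prod.reindex_bij_witness[of _ "\<lambda>y. y / x" "\<lambda>y. x * y"]) (use assms in auto)
  moreover have "(\<Prod>y\<in>UNIV-{0::'a}. y) \<noteq> 0" by (simp add: prod_zero_iff)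
  ultimately show ?thesis using c by (metis mult_cancel_right1)
qed

lemma power_mod_eq:
  fixes x :: "'a::comm_monoid_mult"
  assumes "x ^ s = 1" shows "x ^ (k mod s) = x ^ k"
proof -
  have "x ^ k = x ^ (s * (k div s) + k mod s)" by simp
  also have "\<dots> = (x ^ s) ^ (k div s) * x ^ (k mod s)" by (simp only: power_add power_mult)
  finally show ?thesis using assms by simp
qed

lemma gen_inj:
  fixes \<alpha> :: "'a::{field,finite}"
  assumes "\<alpha> \<noteq> 0" "\<forall>x::'a. x \<noteq> 0 \<longrightarrow> (\<exists>k::nat. x = \<alpha> ^ k)"
  shows "inj_on (\<lambda>k. \<alpha> ^ k) {0..<card (UNIV :: 'a set) - 1}"
proof (rule inj_onI, rule ccontr)
  let ?N = "card (UNIV :: 'a set) - 1"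
  have key: False if ij: "i < j" "j < ?N" "\<alpha> ^ i = \<alpha> ^ j" for i j
  proof -
    define d where "d = j - i"
    have d0: "0 < d" "d < ?N" using ij unfolding d_def by auto
    have "i + d = j" using ij unfolding d_def by simp
    hence "\<alpha> ^ i * \<alpha> ^ d = \<alpha> ^ j" by (metis power_add)
    hence "\<alpha> ^ i * \<alpha> ^ d = \<alpha> ^ i * 1" using ij by simp
    hence ad: "\<alpha> ^ d = 1" using assms(1) by simp
    have "UNIV - {0::'a} \<subseteq> (\<lambda>k. \<alpha> ^ k) ` {0..<d}"
    proof
      fix x :: 'a assume "x \<in> UNIV - {0}"
      then obtain k where "x = \<alpha> ^ k" using assms(2) by auto
      hence "x = \<alpha> ^ (k mod d)" using power_mod_eq[OF ad] by simp
      moreover have "k mod d < d" using d0 by simp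
      ultimately show "x \<in> (\<lambda>k. \<alpha> ^ k) ` {0..<d}" by auto
    qed
    hence "card (UNIV - {0::'a}) \<le> card ((\<lambda>k. \<alpha> ^ k) ` {0..<d})" by (intro card_mono) auto
    also have "\<dots> \<le> d" using card_image_le[of "{0..<d}" "\<lambda>k. \<alpha> ^ k"] by simp
    finally show False using d0 by (simp add: card_Diff_singleton)
  qed
  fix i j assume "i \<in> {0..<?N}" "j \<in> {0..<?N}" "\<alpha> ^ i = \<alpha> ^ j" "i \<noteq> j"
  thus False using key[of i j] key[of j i] by (metis atLeastLessThan_iff linorder_neqE_nat)
qed

lemma psi_facts:
  fixes \<psi> :: "'a::field \<Rightarrow> 'a"
  assumes "Fp_linear_functional \<psi>"
  shows "\<psi> 0 = 0" "\<And>a b. \<psi> (a - b) = \<psi> a - \<psi> b"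
    "\<And>f A. \<psi> (\<Sum>x\<in>A. f x) = (\<Sum>x\<in>A. \<psi> (f x))"
proof -
  have add: "\<And>x y. \<psi> (x + y) = \<psi> x + \<psi> y" using assms unfolding Fp_linear_functional_def by blast
  have h0: "\<psi> 0 + \<psi> 0 = \<psi> 0" using add[of 0 0] by simp
  show z: "\<psi> 0 = 0" using h0 by (metis add_cancel_right_right)
  show "\<psi> (a - b) = \<psi> a - \<psi> b" for a b using add[of "a - b" b] by (simp add: algebra_simps)
  show "\<psi> (\<Sum>x\<in>A. f x) = (\<Sum>x\<in>A. \<psi> (f x))" for f A
  proof (cases "finite A")
    case True thus ?thesis by (induction A rule: finite_induct) (simp_all add: z add)
  qed (simp add: z)
qed

lemma sampling_lemma:
  fixes g :: "'i \<Rightarrow> 'a::{field,finite}"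
  assumes fG: "finite G"
    and hT: "\<And>ab x. ab \<in> G \<Longrightarrow> x \<in> G \<Longrightarrow> T ab x \<in> G \<and> g (T ab x) = g ab * g x"
    and hg: "g ` G = UNIV - {0}" and ginj: "inj_on g G"
    and S: "S \<subseteq> G" "spn g S = UNIV" "card S = n"
    and card: "card (UNIV :: 'a set) = CHAR('a) ^ n"
    and psi: "Fp_linear_functional \<psi>" "\<exists>x. \<psi> x \<noteq> 0"
  shows "bij_betw (\<lambda>ab. restrict (\<lambda>x. \<psi> (g (T ab x))) S) G {f \<in> S \<rightarrow>\<^sub>E Fp. \<exists>x\<in>S. f x \<noteq> 0}"
proof -
  have fS: "finite S" using S(1) fG finite_subset by auto
  have psiFp: "\<And>x. \<psi> x \<in> Fp" and hom: "\<And>c x. c \<in> Fp \<Longrightarrow> \<psi> (c * x) = c * \<psi> x"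
    using psi(1) unfolding Fp_linear_functional_def by blast+
  have Z: "c = 0" if h: "\<forall>x\<in>S. \<psi> (c * g x) = 0" for c
  proof (rule ccontr)
    assume c: "c \<noteq> 0"
    obtain z where z: "\<psi> z \<noteq> 0" using psi(2) by blast
    have "z / c \<in> spn g S" using S(2) by simp
    then obtain d where d: "\<forall>x\<in>S. d x \<in> Fp" "z / c = lc g S d" unfolding spn_iff by blast
    have "z = c * lc g S d" using d c by (simp add: field_simps)
    also have "\<dots> = (\<Sum>x\<in>S. d x * (c * g x))" unfolding lc_def sum_distrib_left
      by (rule sum.cong) (simp_all add: algebra_simps)
    finally have "\<psi> z = (\<Sum>x\<in>S. \<psi> (d x * (c * g x)))" using psi_facts(3)[OF psi(1)] by simp
    also have "\<dots> = (\<Sum>x\<in>S. d x * \<psi> (c * g x))" by (rule sum.cong) (simp_all add: hom d(1))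
    also have "\<dots> = 0" using h by simp
    finally show False using z by simp
  qed
  define V where "V = (\<lambda>ab. restrict (\<lambda>x. \<psi> (g (T ab x))) S)"
  have V: "V ab = restrict (\<lambda>x. \<psi> (g ab * g x)) S" if "ab \<in> G" for ab
    unfolding V_def using hT[OF that] S(1) by (auto simp: fun_eq_iff)
  have gnz: "\<And>x. x \<in> G \<Longrightarrow> g x \<noteq> 0" using hg by blast
  define Tg where "Tg = {f \<in> S \<rightarrow>\<^sub>E (Fp::'a set). \<exists>x\<in>S. f x \<noteq> 0}"
  have img: "V ` G \<subseteq> Tg"
  proof
    fix f assume "f \<in> V ` G"
    then obtain ab where ab: "ab \<in> G" "f = V ab" by auto
    have "f \<in> S \<rightarrow>\<^sub>E Fp" using ab V psiFp by auto
    moreover have "\<exists>x\<in>S. f x \<noteq> 0"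
    proof (rule ccontr)
      assume "\<not> (\<exists>x\<in>S. f x \<noteq> 0)"
      hence "\<forall>x\<in>S. \<psi> (g ab * g x) = 0" using ab V by auto
      hence "g ab = 0" by (rule Z)
      thus False using gnz ab by blast
    qed
    ultimately show "f \<in> Tg" unfolding Tg_def by blast
  qed
  have inj: "inj_on V G"
  proof (rule inj_onI)
    fix a b assume a: "a \<in> G" and b: "b \<in> G" and e: "V a = V b"
    have "\<forall>x\<in>S. \<psi> ((g a - g b) * g x) = 0"
    proof
      fix x assume x: "x \<in> S"
      have "\<psi> (g a * g x) = \<psi> (g b * g x)" using e V[OF a] V[OF b] x by (metis restrict_apply')
      thus "\<psi> ((g a - g b) * g x) = 0" using psi_facts(2)[OF psi(1)] by (simp add: left_diff_distrib)
    qed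
    hence "g a - g b = 0" by (rule Z)
    thus "a = b" using ginj a b by (simp add: inj_on_eq_iff)
  qed
  have Tg_eq: "Tg = (S \<rightarrow>\<^sub>E Fp) - {restrict (\<lambda>_. 0) S}"
    unfolding Tg_def by (auto simp: fun_eq_iff PiE_def extensional_def)
  have "card Tg = CHAR('a) ^ n - 1" unfolding Tg_eq
    using fS S(3) by (simp add: card_Diff_singleton card_PiE card_Fp)
  also have "\<dots> = card G"
  proof -
    have "card G = card (UNIV - {0::'a})" using hg ginj card_image by metis
    thus ?thesis using card by (simp add: card_Diff_singleton)
  qed
  finally have "card (V ` G) = card Tg" using inj card_image by metis
  moreover have "finite Tg" unfolding Tg_eq using fS by (intro finite_Diff finite_PiE) auto
  ultimately have "V ` G = Tg" using img by (intro card_subset_eq) auto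
  thus ?thesis using inj unfolding bij_betw_def V_def Tg_def by simp
qed



lemma injT_lemma:
  fixes g :: "'i \<Rightarrow> 'a::field"
  assumes hT: "\<And>ab x. ab \<in> G \<Longrightarrow> x \<in> G \<Longrightarrow> T ab x \<in> G \<and> g (T ab x) = g ab * g x"
    and hg: "g ` G = UNIV - {0}" and ginj: "inj_on g G" and ab: "ab \<in> G" and S0: "S0 \<subseteq> G"
  shows "inj_on (T ab) S0"
proof (rule inj_onI)
  fix x y assume x: "x \<in> S0" and y: "y \<in> S0" and e: "T ab x = T ab y"
  have "g ab * g x = g ab * g y" using hT[OF ab] x y S0 e by (metis subsetD)
  moreover have "g ab \<noteq> 0" using hg ab by blast
  ultimately have "g x = g y" by simp
  thus "x = y" using ginj x y S0 by (meson inj_onD subsetD)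
qed

lemma greedy_all:
  fixes g :: "'i \<Rightarrow> 'a::{field,finite}"
  assumes fG: "finite G"
    and hT: "\<And>ab x. ab \<in> G \<Longrightarrow> x \<in> G \<Longrightarrow> T ab x \<in> G \<and> g (T ab x) = g ab * g x"
    and hg: "g ` G = UNIV - {0}" and ginj: "inj_on g G"
    and S0: "S0 \<subseteq> G" "indep g S0" "card S0 = m" "m \<ge> 1"
    and card: "card (UNIV :: 'a set) = CHAR('a) ^ n"
  shows "r * m \<le> n \<Longrightarrow> \<exists>sh. (\<forall>k\<in>{1..r}. sh k \<in> G) \<and>
     (\<forall>k\<in>{1..r}. \<forall>l\<in>{1..r}. k \<noteq> l \<longrightarrow> T (sh k) ` S0 \<inter> T (sh l) ` S0 = {}) \<and>
     indep g (\<Union>k\<in>{1..r}. T (sh k) ` S0) \<and> card (\<Union>k\<in>{1..r}. T (sh k) ` S0) = r * m"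
proof (induction r)
  case 0
  show ?case by (rule exI[of _ "\<lambda>_. undefined"]) (simp add: indep_def)
next
  case (Suc r)
  then obtain sh where sh: "\<forall>k\<in>{1..r}. sh k \<in> G"
     "\<forall>k\<in>{1..r}. \<forall>l\<in>{1..r}. k \<noteq> l \<longrightarrow> T (sh k) ` S0 \<inter> T (sh l) ` S0 = {}"
     "indep g (\<Union>k\<in>{1..r}. T (sh k) ` S0)" "card (\<Union>k\<in>{1..r}. T (sh k) ` S0) = r * m"
    by auto
  define U where "U = (\<Union>k\<in>{1..r}. T (sh k) ` S0)"
  have UG: "U \<subseteq> G" unfolding U_def using sh(1) hT S0(1) by blast
  have "card U + m \<le> n" using sh(4) Suc.prems unfolding U_def by simp
  then obtain ab where ab: "ab \<in> G" "U \<inter> T ab ` S0 = {}" "indep g (U \<union> T ab ` S0)"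
    using greedy_step[OF fG hT hg ginj S0 UG _ _ card] sh(3) unfolding U_def by blast
  define sh' where "sh' = sh(Suc r := ab)"
  have eqU: "(\<Union>k\<in>{1..Suc r}. T (sh' k) ` S0) = U \<union> T ab ` S0"
  proof -
    have "{1..Suc r} = insert (Suc r) {1..r}" by auto
    moreover have "(\<Union>k\<in>{1..r}. T (sh' k) ` S0) = U" unfolding U_def sh'_def by auto
    ultimately show ?thesis unfolding sh'_def by auto
  qed
  have fU: "finite U" using UG fG finite_subset by auto
  have fS0: "finite S0" using S0(1) fG finite_subset by auto
  have cT: "card (T ab ` S0) = m" using injT_lemma[OF hT hg ginj ab(1) S0(1)] S0(3) card_image by blast
  show ?case
  proof (intro exI[of _ sh'] conjI)
    show "\<forall>k\<in>{1..Suc r}. sh' k \<in> G" using sh(1) ab(1) unfolding sh'_def by auto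
    show "\<forall>k\<in>{1..Suc r}. \<forall>l\<in>{1..Suc r}. k \<noteq> l \<longrightarrow> T (sh' k) ` S0 \<inter> T (sh' l) ` S0 = {}"
    proof (intro ballI impI)
      fix k l assume k: "k \<in> {1..Suc r}" and l: "l \<in> {1..Suc r}" and kl: "k \<noteq> l"
      show "T (sh' k) ` S0 \<inter> T (sh' l) ` S0 = {}"
      proof (cases "k = Suc r")
        case True
        hence "l \<in> {1..r}" using l kl by auto
        hence "T (sh' l) ` S0 \<subseteq> U" unfolding U_def sh'_def by auto
        moreover have "sh' k = ab" using True unfolding sh'_def by simp
        ultimately show ?thesis using ab(2) by blast
      next
        case False
        hence k': "k \<in> {1..r}" using k by auto
        show ?thesis
        proof (cases "l = Suc r")
          case True
          have "T (sh' k) ` S0 \<subseteq> U" using k' unfolding U_def sh'_def by auto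
          moreover have "sh' l = ab" using True unfolding sh'_def by simp
          ultimately show ?thesis using ab(2) by blast
        next
          case False
          hence "l \<in> {1..r}" using l by auto
          thus ?thesis using sh(2) k' kl \<open>k \<noteq> Suc r\<close> False unfolding sh'_def by auto
        qed
      qed
    qed
    show "indep g (\<Union>k\<in>{1..Suc r}. T (sh' k) ` S0)" using eqU ab(3) by simp
    show "card (\<Union>k\<in>{1..Suc r}. T (sh' k) ` S0) = Suc r * m"
      using eqU card_Un_disjoint[OF fU finite_imageI[OF fS0] ab(2)] cT sh(4)
      unfolding U_def by simp
  qed
qed



lemma crt_inj:
  fixes s t i i' j j' :: nat
  assumes "coprime s t" "i < s" "i' < s" "j < t" "j' < t"
    and "(t*i+s*j) mod (s*t) = (t*i'+s*j') mod (s*t)"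
  shows "i = i' \<and> j = j'"
proof -
  have "int (t*i+s*j) mod int (s*t) = int (t*i'+s*j') mod int (s*t)"
    using assms(6) by (metis of_nat_mod)
  hence d: "int (s*t) dvd int (t*i+s*j) - int (t*i'+s*j')" by (simp add: mod_eq_dvd_iff)
  have eq: "int (t*i+s*j) - int (t*i'+s*j') = int t * (int i - int i') + int s * (int j - int j')"
    by (simp add: algebra_simps)
  have ds: "int s dvd int t * (int i - int i')"
  proof -
    have "int s dvd int t * (int i - int i') + int s * (int j - int j')"
      using d eq by (metis dvd_mult_left of_nat_mult)
    thus ?thesis by (simp add: dvd_add_left_iff)
  qed
  have dt: "int t dvd int s * (int j - int j')"
  proof -
    have "int t dvd int t * (int i - int i') + int s * (int j - int j')"
      using d eq by (metis dvd_mult_right of_nat_mult)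
    thus ?thesis by (simp add: dvd_add_right_iff)
  qed
  have cp: "coprime (int s) (int t)" using assms(1) by simp
  have "int s dvd int i - int i'" using ds cp by (simp add: coprime_dvd_mult_right_iff)
  moreover have "int t dvd int j - int j'" using dt cp coprime_commute
    by (metis coprime_dvd_mult_right_iff)
  ultimately have d1: "int s dvd int i - int i'" and d2: "int t dvd int j - int j'" by auto
  have "i = i'"
  proof (rule ccontr)
    assume "i \<noteq> i'"
    hence "int i - int i' \<noteq> 0" by simp
    hence "\<bar>int s\<bar> \<le> \<bar>int i - int i'\<bar>" using d1 by (rule dvd_imp_le_int)
    thus False using assms(2,3) by linarith
  qed
  moreover have "j = j'"
  proof (rule ccontr)
    assume "j \<noteq> j'"
    hence "int j - int j' \<noteq> 0" by simp
    hence "\<bar>int t\<bar> \<le> \<bar>int j - int j'\<bar>" using d2 by (rule dvd_imp_le_int)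
    thus False using assms(4,5) by linarith
  qed
  ultimately show ?thesis by simp
qed

theorem mainTheorem4:
  fixes \<alpha> :: "'a::{field,finite}"
    and p n s t m :: nat
    and S0 :: "(nat \<times> nat) set"
  assumes "prime p" and "n \<ge> 1" and "card (UNIV :: 'a set) = p ^ n"
    and "p ^ n - 1 = s * t" and "0 < s" and "s < t" and "coprime s t"
    and "\<alpha> \<noteq> 0" and "\<forall>x::'a. x \<noteq> 0 \<longrightarrow> (\<exists>k::nat. x = \<alpha> ^ k)"
    and "S0 \<subseteq> {0..<s} \<times> {0..<t}"
    and "lin_indep_pat (\<alpha> ^ t) (\<alpha> ^ s) S0"
    and "card S0 = m" and "m dvd n"
  shows "\<exists>sh :: nat \<Rightarrow> nat \<times> nat.
           (\<forall>k\<in>{1..n div m}. sh k \<in> {0..<s} \<times> {0..<t}) \<and>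
           (\<forall>k\<in>{1..n div m}. \<forall>l\<in>{1..n div m}. k \<noteq> l \<longrightarrow>
               shiftT s t (sh k) ` S0 \<inter> shiftT s t (sh l) ` S0 = {}) \<and>
           basis_pat (\<alpha> ^ t) (\<alpha> ^ s) (\<Union>k\<in>{1..n div m}. shiftT s t (sh k) ` S0) \<and>
           (\<forall>\<psi>. Fp_linear_functional \<psi> \<and> (\<exists>x. \<psi> x \<noteq> 0) \<longrightarrow>
               sampling_pat s t (\<alpha> ^ t) (\<alpha> ^ s) \<psi> (\<Union>k\<in>{1..n div m}. shiftT s t (sh k) ` S0))"
proof -
  note A = assms
  define \<beta> where "\<beta> = \<alpha> ^ t"
  define \<gamma> where "\<gamma> = \<alpha> ^ s"
  define e where "e = pat_elt \<beta> \<gamma>"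
  define G where "G = {0..<s} \<times> {0..<t}"
  define T where "T = shiftT s t"
  have q: "CHAR('a) = p" using CHAR_eq_p A(1,3) by blast
  have cardU: "card (UNIV :: 'a set) = CHAR('a) ^ n" using A(3) q by simp
  have N: "card (UNIV :: 'a set) - 1 = s * t" using A(3,4) by simp
  have t0: "0 < t" using A(5,6) by simp
  have a1: "\<alpha> ^ (s * t) = 1" using power_card_minus1[OF A(8)] N by simp
  have b1: "\<beta> ^ s = 1" unfolding \<beta>_def using a1 by (simp flip: power_mult add: mult.commute)
  have g1: "\<gamma> ^ t = 1" unfolding \<gamma>_def using a1 by (simp flip: power_mult)
  have eexp: "e x = \<alpha> ^ (t * fst x + s * snd x)" for x
    unfolding e_def pat_elt_def \<beta>_def \<gamma>_def by (simp add: power_add power_mult)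
  have fG: "finite G" unfolding G_def by simp
  have ginj: "inj_on e G"
  proof (rule inj_onI)
    fix x y assume x: "x \<in> G" and y: "y \<in> G" and exy: "e x = e y"
    let ?A = "t * fst x + s * snd x" and ?B = "t * fst y + s * snd y"
    have "\<alpha> ^ (?A mod (s*t)) = \<alpha> ^ (?B mod (s*t))"
      using exy eexp power_mod_eq[OF a1] by metis
    moreover have "?A mod (s*t) \<in> {0..<card (UNIV::'a set) - 1}" "?B mod (s*t) \<in> {0..<card (UNIV::'a set) - 1}"
      using N A(5) t0 by simp_all
    ultimately have "?A mod (s*t) = ?B mod (s*t)" by (rule inj_onD[OF gen_inj[OF A(8,9)]])
    hence "fst x = fst y \<and> snd x = snd y"
      using crt_inj[OF A(7)] x y unfolding G_def by auto
    thus "x = y" by (simp add: prod_eq_iff)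
  qed
  have enz: "e x \<noteq> 0" for x unfolding eexp using A(8) by simp
  have hg: "e ` G = UNIV - {0}"
  proof -
    have sub: "e ` G \<subseteq> UNIV - {0}" using enz by auto
    have "card (e ` G) = card G" using ginj card_image by blast
    also have "\<dots> = s * t" unfolding G_def by simp
    also have "\<dots> = card (UNIV - {0::'a})" using N by (simp add: card_Diff_singleton)
    finally show ?thesis using sub by (intro card_subset_eq) auto
  qed
  have hT: "T ab x \<in> G \<and> e (T ab x) = e ab * e x" if "ab \<in> G" "x \<in> G" for ab x
  proof
    show "T ab x \<in> G" unfolding T_def shiftT_def G_def using A(5) t0 by simp
    have "e (T ab x) = \<beta> ^ (fst x + fst ab) * \<gamma> ^ (snd x + snd ab)"
      unfolding T_def shiftT_def e_def pat_elt_def using power_mod_eq[OF b1] power_mod_eq[OF g1] by simp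
    thus "e (T ab x) = e ab * e x" unfolding e_def pat_elt_def by (simp add: power_add algebra_simps)
  qed
  have m1: "m \<ge> 1" using A(2,13) by (cases "m = 0") auto
  have S0: "S0 \<subseteq> G" "indep e S0" "card S0 = m" "m \<ge> 1"
    using A(10,11,12) m1 unfolding G_def e_def indep_def lin_indep_pat_def lc_def \<beta>_def \<gamma>_def by auto
  define r where "r = n div m"
  have rm: "r * m = n" unfolding r_def using A(13) by simp
  obtain sh where sh: "\<forall>k\<in>{1..r}. sh k \<in> G"
     "\<forall>k\<in>{1..r}. \<forall>l\<in>{1..r}. k \<noteq> l \<longrightarrow> T (sh k) ` S0 \<inter> T (sh l) ` S0 = {}"
     "indep e (\<Union>k\<in>{1..r}. T (sh k) ` S0)" "card (\<Union>k\<in>{1..r}. T (sh k) ` S0) = r * m"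
    using greedy_all[OF fG hT hg ginj S0 cardU, of r] rm by auto
  define S where "S = (\<Union>k\<in>{1..r}. T (sh k) ` S0)"
  have SG: "S \<subseteq> G" unfolding S_def using sh(1) hT S0(1) by blast
  have fS: "finite S" using SG fG finite_subset by auto
  have cS: "card S = n" using sh(4) rm unfolding S_def by simp
  have spU: "spn e S = UNIV"
  proof -
    have "card (spn e S) = card (UNIV :: 'a set)" using card_spn[OF fS sh(3)[folded S_def]] cS cardU by simp
    thus ?thesis by (simp add: card_eq_UNIV_imp_eq_UNIV)
  qed
  have basis: "basis_pat \<beta> \<gamma> S"
    unfolding basis_pat_def
  proof
    show "lin_indep_pat \<beta> \<gamma> S" using sh(3) unfolding S_def lin_indep_pat_def indep_def lc_def e_def .
    show "\<forall>y. \<exists>c. (\<forall>x\<in>S. c x \<in> Fp) \<and> y = (\<Sum>x\<in>S. c x * pat_elt \<beta> \<gamma> x)"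
    proof
      fix y :: 'a
      have "y \<in> spn e S" using spU by simp
      thus "\<exists>c. (\<forall>x\<in>S. c x \<in> Fp) \<and> y = (\<Sum>x\<in>S. c x * pat_elt \<beta> \<gamma> x)"
        unfolding spn_iff lc_def e_def .
    qed
  qed
  have samp: "sampling_pat s t \<beta> \<gamma> \<psi> S" if "Fp_linear_functional \<psi> \<and> (\<exists>x. \<psi> x \<noteq> 0)" for \<psi>
  proof -
    have "bij_betw (\<lambda>ab. restrict (\<lambda>x. \<psi> (e (T ab x))) S) G {f \<in> S \<rightarrow>\<^sub>E Fp. \<exists>x\<in>S. f x \<noteq> 0}"
      using sampling_lemma[OF fG hT hg ginj SG spU cS cardU] that by blast
    thus ?thesis unfolding sampling_pat_def value_pat_def e_def T_def G_def .
  qed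
  show ?thesis
  proof (intro exI[of _ sh] conjI)
    show "\<forall>k\<in>{1..n div m}. sh k \<in> {0..<s} \<times> {0..<t}" using sh(1) unfolding G_def r_def .
    show "\<forall>k\<in>{1..n div m}. \<forall>l\<in>{1..n div m}. k \<noteq> l \<longrightarrow>
               shiftT s t (sh k) ` S0 \<inter> shiftT s t (sh l) ` S0 = {}"
      using sh(2) unfolding T_def r_def .
    show "basis_pat (\<alpha> ^ t) (\<alpha> ^ s) (\<Union>k\<in>{1..n div m}. shiftT s t (sh k) ` S0)"
      using basis unfolding S_def \<beta>_def \<gamma>_def T_def r_def .
    show "\<forall>\<psi>. Fp_linear_functional \<psi> \<and> (\<exists>x. \<psi> x \<noteq> 0) \<longrightarrow>
               sampling_pat s t (\<alpha> ^ t) (\<alpha> ^ s) \<psi> (\<Union>k\<in>{1..n div m}. shiftT s t (sh k) ` S0)"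
    proof (intro allI impI)
      fix \<psi> :: "'a \<Rightarrow> 'a" assume h: "Fp_linear_functional \<psi> \<and> (\<exists>x. \<psi> x \<noteq> 0)"
      show "sampling_pat s t (\<alpha> ^ t) (\<alpha> ^ s) \<psi> (\<Union>k\<in>{1..n div m}. shiftT s t (sh k) ` S0)"
        using samp[OF h] unfolding S_def \<beta>_def \<gamma>_def T_def r_def .
    qed
  qed
qed

end
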